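(* Let $-\infty \le \alpha < \beta \le \infty$ and let $A \colon (\alpha,\beta) \to \mathbb{R}^{N\times N}$ have locally integrable entries $a_{ij}(\cdot)$, such that for every $t \in (\alpha,\beta)$ the matrix $A(t)$ has all off-diagonal entries nonnegative. Consider the system $x' = A(t)x$, $t\in(\alpha,\beta)$. Then for each $t_0 \in (\alpha,\beta)$ and each $x_0 \in \mathbb{R}^N_{++}$, writing the (Carath\'eodory) solution with $x(t_0)=x_0$ as $x(t) = (x_1(t),\dots,x_N(t))^{T}$, the inequality \[ \prod_{i=1}^N x_i(t) \ge \exp\biggl( \int_{t_0}^{t} \Bigl( \operatorname{tr} A(\tau) + 2\sum_{1\le j<k\le N} \sqrt{a_{jk}(\tau)\,a_{kj}(\tau)} \Bigr)\, d\tau \biggr) \prod_{i=1}^N x_i(t_0) \] holds for all $t \in (t_0,\beta)$.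
   Context: $\mathbb{R}^N_{++}$ denotes the set of vectors in $\mathbb{R}^N$ with all coordinates strictly positive. A (Carath\'eodory) solution of $x'=A(t)x$ with $x(t_0)=x_0$ is a function $x\colon(\alpha,\beta)\to\mathbb{R}^N$, absolutely continuous on every compact subinterval, with $x(t_0)=x_0$, satisfying the equation for Lebesgue-a.e. $t\in(\alpha,\beta)$; it exists and is unique. *)

theory Defs
  imports "HOL-Analysis.Analysis"
begin

definition abs_cont_on :: "real set \<Rightarrow> (real \<Rightarrow> 'a::real_normed_vector) \<Rightarrow> bool" where
  "abs_cont_on S f \<longleftrightarrow>
     (\<forall>e>0. \<exists>d>0. \<forall>(I::nat set) u v.
        finite I \<and> (\<forall>i\<in>I. u i \<le> v i \<and> {u i..v i} \<subseteq> S)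
        \<and> disjoint_family_on (\<lambda>i. {u i<..<v i}) I
        \<and> (\<Sum>i\<in>I. v i - u i) < d
        \<longrightarrow> (\<Sum>i\<in>I. norm (f (v i) - f (u i))) < e)"

definition open_ivl :: "ereal \<Rightarrow> ereal \<Rightarrow> real set" where
  "open_ivl \<alpha> \<beta> = {t. \<alpha> < ereal t \<and> ereal t < \<beta>}"

definition caratheodory_solution ::
  "ereal \<Rightarrow> ereal \<Rightarrow> (real \<Rightarrow> real^'n^'n) \<Rightarrow> real \<Rightarrow> real^'n \<Rightarrow> (real \<Rightarrow> real^'n) \<Rightarrow> bool" where
  "caratheodory_solution \<alpha> \<beta> A t0 x0 x \<longleftrightarrow>
     x t0 = x0
     \<and> (\<forall>a b. {a..b} \<subseteq> open_ivl \<alpha> \<beta> \<longrightarrow> abs_cont_on {a..b} x)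
     \<and> (AE t in lebesgue. t \<in> open_ivl \<alpha> \<beta> \<longrightarrow> (x has_vector_derivative (A t *v x t)) (at t))"

end

theory Submission
  imports Defs
begin

hide_const (open) Polynomial.content


lemma ac_general:
  assumes "abs_cont_on S f" "e > 0"
  obtains d where "d > 0" "\<And>(I::'i set) u v. finite I \<Longrightarrow> (\<forall>i\<in>I. u i \<le> v i \<and> {u i..v i} \<subseteq> S)
     \<Longrightarrow> disjoint_family_on (\<lambda>i. {u i<..<v i}) I \<Longrightarrow> (\<Sum>i\<in>I. v i - u i) < d
     \<Longrightarrow> (\<Sum>i\<in>I. norm (f (v i) - f (u i))) < e"
proof -
  obtain d where d: "d > 0" and H: "\<And>(I::nat set) u v.
        finite I \<and> (\<forall>i\<in>I. u i \<le> v i \<and> {u i..v i} \<subseteq> S)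
        \<and> disjoint_family_on (\<lambda>i. {u i<..<v i}) I
        \<and> (\<Sum>i\<in>I. v i - u i) < d
        \<Longrightarrow> (\<Sum>i\<in>I. norm (f (v i) - f (u i))) < e"
    using assms unfolding abs_cont_on_def by meson
  show ?thesis
  proof (rule that[OF d])
    fix I :: "'i set" and u v
    assume fin: "finite I" and uv: "\<forall>i\<in>I. u i \<le> v i \<and> {u i..v i} \<subseteq> S"
      and dj: "disjoint_family_on (\<lambda>i. {u i<..<v i}) I" and sm: "(\<Sum>i\<in>I. v i - u i) < d"
    obtain g where g: "bij_betw g {0..<card I} I" using ex_bij_betw_nat_finite[OF fin] by blast
    have s1: "(\<Sum>i\<in>{0..<card I}. (v \<circ> g) i - (u \<circ> g) i) = (\<Sum>i\<in>I. v i - u i)"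
      using sum.reindex_bij_betw[OF g, of "\<lambda>i. v i - u i"] by simp
    have s2: "(\<Sum>i\<in>{0..<card I}. norm (f ((v \<circ> g) i) - f ((u \<circ> g) i))) = (\<Sum>i\<in>I. norm (f (v i) - f (u i)))"
      using sum.reindex_bij_betw[OF g, of "\<lambda>i. norm (f (v i) - f (u i))"] by simp
    have "disjoint_family_on (\<lambda>i. {(u \<circ> g) i<..<(v \<circ> g) i}) {0..<card I}"
      unfolding disjoint_family_on_def
    proof (intro ballI impI)
      fix m n assume m: "m \<in> {0..<card I}" and n: "n \<in> {0..<card I}" and mn: "m \<noteq> n"
      have gI: "g m \<in> I" "g n \<in> I" using g m n by (meson bij_betwE)+
      have "g m \<noteq> g n" using g m n mn by (metis bij_betw_def inj_onD)
      then show "{(u \<circ> g) m<..<(v \<circ> g) m} \<inter> {(u \<circ> g) n<..<(v \<circ> g) n} = {}"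
        using gI dj[unfolded disjoint_family_on_def, rule_format, of "g m" "g n"] by simp
    qed
    moreover have "\<forall>i\<in>{0..<card I}. (u \<circ> g) i \<le> (v \<circ> g) i \<and> {(u \<circ> g) i..(v \<circ> g) i} \<subseteq> S"
      using uv g unfolding bij_betw_def by auto
    ultimately have "(\<Sum>i\<in>{0..<card I}. norm (f ((v \<circ> g) i) - f ((u \<circ> g) i))) < e"
      using H[of "{0..<card I}" "u \<circ> g" "v \<circ> g"] s1 sm by auto
    then show "(\<Sum>i\<in>I. norm (f (v i) - f (u i))) < e" using s2 by simp
  qed
qed

lemma ac_subset: "abs_cont_on S f \<Longrightarrow> T \<subseteq> S \<Longrightarrow> abs_cont_on T f"
  unfolding abs_cont_on_def by (meson order_trans)

lemma ac_continuous:
  fixes f :: "real \<Rightarrow> 'a::real_normed_vector"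
  assumes "abs_cont_on {a..b} f"
  shows "continuous_on {a..b} f"
  unfolding continuous_on_iff
proof (intro ballI allI impI)
  fix x e assume x: "x \<in> {a..b}" and e: "(0::real) < e"
  obtain d where d: "d > 0" and H: "\<And>(I::nat set) u v.
        finite I \<and> (\<forall>i\<in>I. u i \<le> v i \<and> {u i..v i} \<subseteq> {a..b})
        \<and> disjoint_family_on (\<lambda>i. {u i<..<v i}) I
        \<and> (\<Sum>i\<in>I. v i - u i) < d
        \<Longrightarrow> (\<Sum>i\<in>I. norm (f (v i) - f (u i))) < e"
    using assms e unfolding abs_cont_on_def by meson
  show "\<exists>d>0. \<forall>x'\<in>{a..b}. dist x' x < d \<longrightarrow> dist (f x') (f x) < e"
  proof (intro exI[of _ d] conjI ballI impI)
    fix y assume y: "y \<in> {a..b}" and dy: "dist y x < d"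
    have m: "min x y \<le> max x y" "max x y - min x y < d" using dy by (auto simp: dist_real_def max_def min_def)
    have *: "norm (f (max x y) - f (min x y)) < e"
      using H[of "{0}" "\<lambda>_. min x y" "\<lambda>_. max x y"] x y m
      by (auto simp: disjoint_family_on_def)
    show "dist (f y) (f x) < e"
    proof (cases "x \<le> y")
      case True then show ?thesis using * by (simp add: dist_norm max_def min_def)
    next
      case False then show ?thesis using * by (simp add: dist_norm max_def min_def norm_minus_commute)
    qed
  qed (use d in auto)
qed

lemma ac_component:
  fixes x :: "real \<Rightarrow> real^'n"
  assumes "abs_cont_on S x"
  shows "abs_cont_on S (\<lambda>s. x s $ i)"
  unfolding abs_cont_on_def
proof (intro allI impI)
  fix e :: real assume e: "e > 0"
  obtain d where d: "d > 0" and H: "\<And>(I::nat set) u v.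
        finite I \<and> (\<forall>i\<in>I. u i \<le> v i \<and> {u i..v i} \<subseteq> S)
        \<and> disjoint_family_on (\<lambda>i. {u i<..<v i}) I
        \<and> (\<Sum>i\<in>I. v i - u i) < d
        \<Longrightarrow> (\<Sum>i\<in>I. norm (x (v i) - x (u i))) < e"
    using assms e unfolding abs_cont_on_def by meson
  show "\<exists>d>0. \<forall>(I::nat set) u v. finite I \<and> (\<forall>i\<in>I. u i \<le> v i \<and> {u i..v i} \<subseteq> S) \<and>
              disjoint_family_on (\<lambda>i. {u i<..<v i}) I \<and> (\<Sum>i\<in>I. v i - u i) < d \<longrightarrow>
              (\<Sum>j\<in>I. norm (x (v j) $ i - x (u j) $ i)) < e"
  proof (intro exI[of _ d] conjI allI impI)
    fix I :: "nat set" and u v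
    assume A: "finite I \<and> (\<forall>i\<in>I. u i \<le> v i \<and> {u i..v i} \<subseteq> S) \<and>
              disjoint_family_on (\<lambda>i. {u i<..<v i}) I \<and> (\<Sum>i\<in>I. v i - u i) < d"
    have "(\<Sum>j\<in>I. norm (x (v j) $ i - x (u j) $ i)) \<le> (\<Sum>j\<in>I. norm (x (v j) - x (u j)))"
    proof (rule sum_mono)
      fix j show "norm (x (v j) $ i - x (u j) $ i) \<le> norm (x (v j) - x (u j))"
        using component_le_norm_cart[of "x (v j) - x (u j)" i] by simp
    qed
    then show "(\<Sum>j\<in>I. norm (x (v j) $ i - x (u j) $ i)) < e" using H[OF A] by linarith
  qed (use d in auto)
qed

lemma ac_lipschitz_comp:
  fixes f :: "real \<Rightarrow> real" and g :: "real \<Rightarrow> real"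
  assumes ac: "abs_cont_on S f" and fT: "\<And>s. s \<in> S \<Longrightarrow> f s \<in> T"
    and L: "L \<ge> 0" and lip: "\<And>y z. y \<in> T \<Longrightarrow> z \<in> T \<Longrightarrow> \<bar>g y - g z\<bar> \<le> L * \<bar>y - z\<bar>"
  shows "abs_cont_on S (\<lambda>s. g (f s))"
  unfolding abs_cont_on_def
proof (intro allI impI)
  fix e :: real assume e: "e > 0"
  have e': "e / (L + 1) > 0" using e L by simp
  obtain d where d: "d > 0" and H: "\<And>(I::nat set) u v.
        finite I \<and> (\<forall>i\<in>I. u i \<le> v i \<and> {u i..v i} \<subseteq> S)
        \<and> disjoint_family_on (\<lambda>i. {u i<..<v i}) I
        \<and> (\<Sum>i\<in>I. v i - u i) < d
        \<Longrightarrow> (\<Sum>i\<in>I. norm (f (v i) - f (u i))) < e / (L + 1)"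
    using ac e' unfolding abs_cont_on_def by meson
  show "\<exists>d>0. \<forall>(I::nat set) u v. finite I \<and> (\<forall>i\<in>I. u i \<le> v i \<and> {u i..v i} \<subseteq> S) \<and>
              disjoint_family_on (\<lambda>i. {u i<..<v i}) I \<and> (\<Sum>i\<in>I. v i - u i) < d \<longrightarrow>
              (\<Sum>j\<in>I. norm (g (f (v j)) - g (f (u j)))) < e"
  proof (intro exI[of _ d] conjI allI impI)
    fix I :: "nat set" and u v
    assume A: "finite I \<and> (\<forall>i\<in>I. u i \<le> v i \<and> {u i..v i} \<subseteq> S) \<and>
              disjoint_family_on (\<lambda>i. {u i<..<v i}) I \<and> (\<Sum>i\<in>I. v i - u i) < d"
    have "(\<Sum>j\<in>I. norm (g (f (v j)) - g (f (u j)))) \<le> (\<Sum>j\<in>I. L * norm (f (v j) - f (u j)))"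
    proof (rule sum_mono)
      fix j assume j: "j \<in> I"
      then have "{u j..v j} \<subseteq> S" "u j \<le> v j" using A by auto
      then have "u j \<in> S" "v j \<in> S" by auto
      then show "norm (g (f (v j)) - g (f (u j))) \<le> L * norm (f (v j) - f (u j))"
        using lip fT by simp
    qed
    also have "\<dots> = L * (\<Sum>j\<in>I. norm (f (v j) - f (u j)))" by (simp add: sum_distrib_left)
    also have "\<dots> \<le> L * (e / (L + 1))" using H[OF A] L by (intro mult_left_mono) auto
    also have "\<dots> < e" using L e by (simp add: field_simps)
    finally show "(\<Sum>j\<in>I. norm (g (f (v j)) - g (f (u j)))) < e" .
  qed (use d in auto)
qed

lemma ac_add:
  fixes f g :: "real \<Rightarrow> real"
  assumes "abs_cont_on S f" "abs_cont_on S g"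
  shows "abs_cont_on S (\<lambda>s. f s + g s)"
  unfolding abs_cont_on_def
proof (intro allI impI)
  fix e :: real assume e: "e > 0"
  then have e2: "e/2 > 0" by simp
  obtain d1 where d1: "d1 > 0" and H1: "\<And>(I::nat set) u v.
        finite I \<and> (\<forall>i\<in>I. u i \<le> v i \<and> {u i..v i} \<subseteq> S)
        \<and> disjoint_family_on (\<lambda>i. {u i<..<v i}) I
        \<and> (\<Sum>i\<in>I. v i - u i) < d1
        \<Longrightarrow> (\<Sum>i\<in>I. norm (f (v i) - f (u i))) < e/2"
    using assms(1) e2 unfolding abs_cont_on_def by meson
  obtain d2 where d2: "d2 > 0" and H2: "\<And>(I::nat set) u v.
        finite I \<and> (\<forall>i\<in>I. u i \<le> v i \<and> {u i..v i} \<subseteq> S)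
        \<and> disjoint_family_on (\<lambda>i. {u i<..<v i}) I
        \<and> (\<Sum>i\<in>I. v i - u i) < d2
        \<Longrightarrow> (\<Sum>i\<in>I. norm (g (v i) - g (u i))) < e/2"
    using assms(2) e2 unfolding abs_cont_on_def by meson
  show "\<exists>d>0. \<forall>(I::nat set) u v. finite I \<and> (\<forall>i\<in>I. u i \<le> v i \<and> {u i..v i} \<subseteq> S) \<and>
              disjoint_family_on (\<lambda>i. {u i<..<v i}) I \<and> (\<Sum>i\<in>I. v i - u i) < d \<longrightarrow>
              (\<Sum>j\<in>I. norm (f (v j) + g (v j) - (f (u j) + g (u j)))) < e"
  proof (intro exI[of _ "min d1 d2"] conjI allI impI)
    fix I :: "nat set" and u v
    assume A: "finite I \<and> (\<forall>i\<in>I. u i \<le> v i \<and> {u i..v i} \<subseteq> S) \<and>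
              disjoint_family_on (\<lambda>i. {u i<..<v i}) I \<and> (\<Sum>i\<in>I. v i - u i) < min d1 d2"
    have A1: "(\<Sum>i\<in>I. norm (f (v i) - f (u i))) < e/2" using A by (intro H1) auto
    have A2: "(\<Sum>i\<in>I. norm (g (v i) - g (u i))) < e/2" using A by (intro H2) auto
    have "(\<Sum>j\<in>I. norm (f (v j) + g (v j) - (f (u j) + g (u j))))
       \<le> (\<Sum>j\<in>I. norm (f (v j) - f (u j)) + norm (g (v j) - g (u j)))"
      by (intro sum_mono) (simp add: abs_triangle_ineq[THEN order_trans[rotated]] algebra_simps)
    also have "\<dots> < e" using A1 A2 by (simp add: sum.distrib)
    finally show "(\<Sum>j\<in>I. norm (f (v j) + g (v j) - (f (u j) + g (u j)))) < e" .
  qed (use d1 d2 in auto)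
qed

lemma ac_const: "abs_cont_on S (\<lambda>s. c)"
  unfolding abs_cont_on_def by (intro allI impI exI[of _ 1]) auto

lemma ac_sum:
  fixes f :: "'i \<Rightarrow> real \<Rightarrow> real"
  assumes "finite I" "\<And>i. i \<in> I \<Longrightarrow> abs_cont_on S (f i)"
  shows "abs_cont_on S (\<lambda>s. \<Sum>i\<in>I. f i s)"
  using assms
proof (induction I rule: finite_induct)
  case empty then show ?case using ac_const[of S 0] by simp
next
  case (insert j I)
  then show ?case using ac_add[of S "f j" "\<lambda>s. \<Sum>i\<in>I. f i s"] by simp
qed

lemma pair_sum_split:
  fixes c :: "'n::{finite,linorder} \<times> 'n \<Rightarrow> real"
  shows "(\<Sum>p\<in>UNIV. c p) = (\<Sum>i\<in>UNIV. c (i,i)) + (\<Sum>p\<in>{(j,k). j < k}. c p + c (snd p, fst p))"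
proof -
  let ?D = "{p::'n\<times>'n. fst p = snd p}" and ?L = "{(j::'n,k::'n). j < k}" and ?U = "{p::'n\<times>'n. snd p < fst p}"
  have U: "(UNIV::('n\<times>'n) set) = ?D \<union> ?L \<union> ?U" by (auto simp: not_less_iff_gr_or_eq)
  have "(\<Sum>p\<in>UNIV. c p) = (\<Sum>p\<in>?D \<union> ?L. c p) + (\<Sum>p\<in>?U. c p)"
    unfolding U by (rule sum.union_disjoint) auto
  also have "(\<Sum>p\<in>?D \<union> ?L. c p) = (\<Sum>p\<in>?D. c p) + (\<Sum>p\<in>?L. c p)"
    by (rule sum.union_disjoint) auto
  also have "(\<Sum>p\<in>?D. c p) = (\<Sum>i\<in>UNIV. c (i,i))"
  proof -
    have "?D = (\<lambda>i. (i,i)) ` UNIV" by (auto simp: image_def)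
    then show ?thesis by (simp add: sum.reindex inj_on_def)
  qed
  also have "(\<Sum>p\<in>?U. c p) = (\<Sum>p\<in>?L. c (snd p, fst p))"
  proof -
    have "?U = (\<lambda>p. (snd p, fst p)) ` ?L" by (auto simp: image_def)
    moreover have "inj_on (\<lambda>p::'n\<times>'n. (snd p, fst p)) ?L" by (auto simp: inj_on_def)
    ultimately show ?thesis by (simp add: sum.reindex)
  qed
  finally show ?thesis by (simp add: sum.distrib)
qed

lemma metzler_ineq:
  fixes M :: "real^('n::{finite,linorder})^('n::{finite,linorder})" and y :: "real^('n::{finite,linorder})"
  assumes y: "\<And>i. y $ i > 0" and off: "\<And>i j. i \<noteq> j \<Longrightarrow> M $ i $ j \<ge> 0"
  shows "trace M + 2 * (\<Sum>(j,k)\<in>{(j,k). j < k}. sqrt (M $ j $ k * M $ k $ j)) \<le> (\<Sum>i\<in>UNIV. (M *v y) $ i / y $ i)"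
proof -
  define c where "c p = M $ fst p $ snd p * y $ snd p / y $ fst p" for p :: "'n \<times> 'n"
  have "(\<Sum>i\<in>UNIV. (M *v y) $ i / y $ i) = (\<Sum>i\<in>UNIV. \<Sum>j\<in>UNIV. c (i,j))"
    by (simp add: matrix_vector_mult_def c_def sum_divide_distrib)
  also have "\<dots> = (\<Sum>p\<in>UNIV. c p)"
    by (simp add: sum.cartesian_product)
  also have "\<dots> = (\<Sum>i\<in>UNIV. c (i,i)) + (\<Sum>p\<in>{(j,k). j < k}. c p + c (snd p, fst p))"
    by (rule pair_sum_split)
  also have "(\<Sum>i\<in>UNIV. c (i,i)) = trace M"
    using y by (simp add: c_def trace_def less_imp_neq[symmetric])
  finally have E: "(\<Sum>i\<in>UNIV. (M *v y) $ i / y $ i) = trace M + (\<Sum>p\<in>{(j,k). j < k}. c p + c (snd p, fst p))" .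
  have "(\<Sum>(j,k)\<in>{(j,k). j < k}. 2 * sqrt (M $ j $ k * M $ k $ j)) \<le> (\<Sum>p\<in>{(j,k). j < k}. c p + c (snd p, fst p))"
  proof (rule sum_mono)
    fix p :: "'n \<times> 'n" assume p: "p \<in> {(j,k). j < k}"
    obtain j k where pjk: "p = (j,k)" by fastforce
    have jk: "j \<noteq> k" using p pjk by auto
    have yj: "y $ j > 0" and yk: "y $ k > 0" using y by auto
    have c1: "c (j,k) \<ge> 0" using off[OF jk] yj yk by (simp add: c_def)
    have c2: "c (k,j) \<ge> 0" using off[of k j] jk yj yk by (simp add: c_def)
    have prod: "c (j,k) * c (k,j) = M $ j $ k * M $ k $ j"
      using yj yk by (simp add: c_def field_simps)
    have "sqrt (c (j,k) * c (k,j)) \<le> (c (j,k) + c (k,j)) / 2" by (rule arith_geo_mean_sqrt[OF c1 c2])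
    then show "(case p of (j, k) \<Rightarrow> 2 * sqrt (M $ j $ k * M $ k $ j)) \<le> c p + c (snd p, fst p)"
      using prod pjk by simp
  qed
  then have "2 * (\<Sum>(j,k)\<in>{(j,k). j < k}. sqrt (M $ j $ k * M $ k $ j)) \<le> (\<Sum>p\<in>{(j,k). j < k}. c p + c (snd p, fst p))"
    by (simp add: sum_distrib_left split_def)
  then show ?thesis using E by simp
qed

lemma ln_lipschitz:
  fixes m y z :: real
  assumes m: "m > 0" and y: "y \<ge> m" and z: "z \<ge> m"
  shows "\<bar>ln y - ln z\<bar> \<le> (1/m) * \<bar>y - z\<bar>"
proof -
  have one: "ln u - ln v \<le> (1/m) * \<bar>u - v\<bar>" if u: "u \<ge> m" and v: "v \<ge> m" for u v
  proof -
    have up: "u > 0" and vp: "v > 0" using u v m by auto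
    have "ln u - ln v = ln (u / v)" using up vp by (simp add: ln_div)
    also have "\<dots> \<le> u / v - 1" using up vp by (intro ln_le_minus_one) simp
    also have "\<dots> = (u - v) / v" using vp by (simp add: field_simps)
    also have "\<dots> \<le> \<bar>u - v\<bar> / v" using vp by (intro divide_right_mono) auto
    also have "\<dots> \<le> \<bar>u - v\<bar> / m" using vp v m by (intro divide_left_mono) auto
    finally show ?thesis by simp
  qed
  show ?thesis using one[OF y z] one[OF z y] by (simp add: abs_le_iff abs_minus_commute)
qed

lemma pos_lower_bound:
  fixes f :: "real \<Rightarrow> real"
  assumes "continuous_on {a..b} f" "\<And>s. s \<in> {a..b} \<Longrightarrow> f s > 0"
  obtains m where "m > 0" "\<And>s. s \<in> {a..b} \<Longrightarrow> m \<le> f s"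
proof (cases "a \<le> b")
  case True
  then obtain s0 where s0: "s0 \<in> {a..b}" "\<And>s. s \<in> {a..b} \<Longrightarrow> f s0 \<le> f s"
    using continuous_attains_inf[OF compact_Icc _ assms(1)] by auto
  show ?thesis by (rule that[of "f s0"]) (use s0 assms(2) in auto)
next
  case False then show ?thesis using that[of 1] by auto
qed

lemma ac_ln:
  fixes f :: "real \<Rightarrow> real"
  assumes ac: "abs_cont_on {a..b} f" and pos: "\<And>s. s \<in> {a..b} \<Longrightarrow> f s > 0"
  shows "abs_cont_on {a..b} (\<lambda>s. ln (f s))"
proof -
  obtain m where m: "m > 0" "\<And>s. s \<in> {a..b} \<Longrightarrow> m \<le> f s"
    using pos_lower_bound[OF ac_continuous[OF ac] pos] by blast
  show ?thesis
    by (rule ac_lipschitz_comp[OF ac, of "{m..}" "1/m"]) (use m ln_lipschitz in auto)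
qed

lemma sqrt_prod_integrable:
  fixes f g :: "real \<Rightarrow> real"
  assumes f: "f absolutely_integrable_on {a..b}" and g: "g absolutely_integrable_on {a..b}"
  shows "(\<lambda>s. sqrt (f s * g s)) integrable_on {a..b}"
proof (rule measurable_bounded_by_integrable_imp_integrable_real)
  have L: "{a..b} \<in> sets lebesgue" by simp
  have mf: "f \<in> borel_measurable (lebesgue_on {a..b})" by (rule absolutely_integrable_imp_borel_measurable[OF f L])
  have mg: "g \<in> borel_measurable (lebesgue_on {a..b})" by (rule absolutely_integrable_imp_borel_measurable[OF g L])
  show "(\<lambda>s. sqrt (f s * g s)) \<in> borel_measurable (lebesgue_on {a..b})"
    using mf mg by measurable
  show "(\<lambda>s. \<bar>f s\<bar> + \<bar>g s\<bar>) integrable_on {a..b}"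
    using f g unfolding absolutely_integrable_on_def by (intro integrable_add) auto
  show "\<bar>sqrt (f s * g s)\<bar> \<le> \<bar>f s\<bar> + \<bar>g s\<bar>" for s
  proof -
    have "\<bar>sqrt (f s * g s)\<bar> = sqrt (\<bar>f s\<bar> * \<bar>g s\<bar>)" by (simp add: real_sqrt_abs'[symmetric] abs_mult)
    also have "\<dots> \<le> (\<bar>f s\<bar> + \<bar>g s\<bar>) / 2" by (rule arith_geo_mean_sqrt) auto
    finally show ?thesis by simp
  qed
  show "{a..b} \<in> sets lebesgue" by (rule L)
qed

lemma tagged_pair_facts:
  fixes a b :: real
  assumes p: "p tagged_division_of {a..b}" and xK: "(x,K) \<in> p"
  shows "K = {Inf K..Sup K}" "Inf K \<le> x" "x \<le> Sup K" "Inf K \<le> Sup K"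
    "{Inf K..Sup K} \<subseteq> {a..b}" "content K = Sup K - Inf K" "interior K = {Inf K<..<Sup K}"
proof -
  obtain u v where K: "K = cbox u v" using tagged_division_ofD(4)[OF p xK] by blast
  have xK': "x \<in> K" using tagged_division_ofD(2)[OF p xK] .
  have Kab: "K \<subseteq> {a..b}" using tagged_division_ofD(3)[OF p xK] .
  have uv: "u \<le> v" using xK' K by auto
  have K': "K = {u..v}" using K by simp
  have I: "Inf K = u" "Sup K = v" using uv unfolding K' by simp_all
  show "K = {Inf K..Sup K}" "{Inf K..Sup K} \<subseteq> {a..b}" "Inf K \<le> Sup K"
    using I K' uv Kab by simp_all
  show "Inf K \<le> x" "x \<le> Sup K" using I K' xK' by simp_all
  show "content K = Sup K - Inf K" "interior K = {Inf K<..<Sup K}" using I K' uv by simp_all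
qed


lemma key_ineq:
  fixes F h :: "real \<Rightarrow> real"
  assumes ab: "a \<le> b" and ac: "abs_cont_on {a..b} F" and N: "negligible N"
    and der: "\<And>t. t \<in> {a..b} - N \<Longrightarrow> \<exists>D. (F has_real_derivative D) (at t within {a..b}) \<and> h t \<le> D"
    and hI: "(h has_integral I) {a..b}"
  shows "I \<le> F b - F a"
proof (rule field_le_epsilon)
  fix e :: real assume e: "e > 0"
  define \<epsilon> where "\<epsilon> = e / (2 + (b - a))"
  have \<epsilon>: "\<epsilon> > 0" using e ab by (simp add: \<epsilon>_def)
  have \<epsilon>e0: "\<epsilon> * (2 + (b - a)) = e" using ab unfolding \<epsilon>_def by simp
  have \<epsilon>e1: "\<epsilon> + \<epsilon> * (b - a) + \<epsilon> = \<epsilon> * (2 + (b - a))" by (simp add: algebra_simps)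
  have \<epsilon>e: "\<epsilon> + \<epsilon> * (b - a) + \<epsilon> = e" using \<epsilon>e0 \<epsilon>e1 by simp
  define h' where "h' t = (if t \<in> N then 0 else h t)" for t
  have h'I: "(h' has_integral I) {a..b}"
    by (rule has_integral_spike[OF N _ hI]) (simp add: h'_def)
  obtain \<gamma>1 where g1: "gauge \<gamma>1" and g1p: "\<forall>\<D>. \<D> tagged_division_of {a..b} \<and> \<gamma>1 fine \<D> \<longrightarrow>
        norm (sum (\<lambda>(x,k). content(k) *\<^sub>R h' x) \<D> - I) < \<epsilon>"
    using h'I[unfolded has_integral_real, rule_format, OF \<epsilon>] by (elim exE conjE)
  obtain \<delta> where \<delta>: "\<delta> > 0" and acd: "\<And>(J::(real \<times> real set) set) u v. finite J \<Longrightarrow> (\<forall>i\<in>J. u i \<le> v i \<and> {u i..v i} \<subseteq> {a..b})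
     \<Longrightarrow> disjoint_family_on (\<lambda>i. {u i<..<v i}) J \<Longrightarrow> (\<Sum>i\<in>J. v i - u i) < \<delta>
     \<Longrightarrow> (\<Sum>i\<in>J. norm (F (v i) - F (u i))) < \<epsilon>"
    by (rule ac_general[OF ac \<epsilon>]) blast
  have NI: "(indicator N has_integral (0::real)) {a..b}"
    using N unfolding negligible_def by (metis box_real(2))
  obtain \<gamma>2 where g2: "gauge \<gamma>2" and g2p: "\<forall>\<D>. \<D> tagged_division_of {a..b} \<and> \<gamma>2 fine \<D> \<longrightarrow>
        norm (sum (\<lambda>(x,k). content(k) *\<^sub>R (indicator N x::real)) \<D> - 0) < \<delta>"
    using NI[unfolded has_integral_real, rule_format, OF \<delta>] by (elim exE conjE)
  have "\<forall>t. \<exists>D. t \<in> {a..b} - N \<longrightarrow> (F has_real_derivative D) (at t within {a..b}) \<and> h t \<le> D"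
    using der by blast
  then obtain D where D: "\<And>t. t \<in> {a..b} - N \<Longrightarrow> (F has_real_derivative D t) (at t within {a..b}) \<and> h t \<le> D t"
    by metis
  have "\<forall>t. \<exists>d>0. t \<in> {a..b} - N \<longrightarrow> (\<forall>y\<in>{a..b}. norm (y - t) < d \<longrightarrow> norm (F y - F t - D t * (y - t)) \<le> \<epsilon> * norm (y - t))"
  proof
    fix t show "\<exists>d>0. t \<in> {a..b} - N \<longrightarrow> (\<forall>y\<in>{a..b}. norm (y - t) < d \<longrightarrow> norm (F y - F t - D t * (y - t)) \<le> \<epsilon> * norm (y - t))"
    proof (cases "t \<in> {a..b} - N")
      case True
      then have "(F has_derivative (*) (D t)) (at t within {a..b})"
        using D[OF True] by (simp add: has_field_derivative_def)
      then show ?thesis using \<epsilon> unfolding has_derivative_within_alt by blast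
    next
      case False then show ?thesis by (metis zero_less_one)
    qed
  qed
  then obtain dd where dd: "\<And>t. dd t > 0" and ddp: "\<And>t y. t \<in> {a..b} - N \<Longrightarrow> y \<in> {a..b} \<Longrightarrow> norm (y - t) < dd t \<Longrightarrow> norm (F y - F t - D t * (y - t)) \<le> \<epsilon> * norm (y - t)"
    by metis
  define \<gamma> where "\<gamma> t = \<gamma>1 t \<inter> \<gamma>2 t \<inter> ball t (dd t)" for t
  have g: "gauge \<gamma>" unfolding \<gamma>_def using g1 g2 gauge_ball_dependent[of dd] dd by (intro gauge_Int) auto
  obtain p where p: "p tagged_division_of {a..b}" and fp: "\<gamma> fine p"
    using fine_division_exists_real[OF g] by blast
  have fp1: "\<gamma>1 fine p" and fp2: "\<gamma>2 fine p" and fp3: "(\<lambda>t. ball t (dd t)) fine p"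
    using fp unfolding \<gamma>_def fine_Int by auto
  have finp: "finite p" using p by blast
  define pN where "pN = {i \<in> p. fst i \<in> N}"
  have termb: "F (Sup K) - F (Inf K) \<ge> content K * h' x - \<epsilon> * content K - (if x \<in> N then norm (F (Sup K) - F (Inf K)) else 0)"
    if xK: "(x,K) \<in> p" for x K
  proof -
    note tf = tagged_pair_facts[OF p xK]
    show ?thesis
    proof (cases "x \<in> N")
      case True
      have "\<epsilon> * content K \<ge> 0" using tf \<epsilon> by simp
      then show ?thesis using True by (simp add: h'_def abs_ge_minus_self)
    next
      case False
      have "x \<in> {Inf K..Sup K}" using tf(2,3) by simp
      then have xab: "x \<in> {a..b} - N" using tf(5) False by blast
      have sub: "K \<subseteq> ball x (dd x)" using fp3 xK unfolding fine_def by blast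
      have SK: "Sup K \<in> K" "Inf K \<in> K" using tf by auto
      have SKab: "Sup K \<in> {a..b}" "Inf K \<in> {a..b}" using SK tagged_division_ofD(3)[OF p xK] by auto
      have nS: "norm (Sup K - x) < dd x" and nI: "norm (Inf K - x) < dd x"
        using sub SK by (auto simp: dist_real_def abs_minus_commute)
      have A1: "norm (F (Sup K) - F x - D x * (Sup K - x)) \<le> \<epsilon> * norm (Sup K - x)"
        using ddp[OF xab SKab(1) nS] by simp
      have A2: "norm (F (Inf K) - F x - D x * (Inf K - x)) \<le> \<epsilon> * norm (Inf K - x)"
        using ddp[OF xab SKab(2) nI] by simp
      have hD: "h x \<le> D x" using D[OF xab] by blast
      have "F (Sup K) - F (Inf K) \<ge> D x * (Sup K - Inf K) - \<epsilon> * (Sup K - Inf K)"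
      proof -
        have a1: "F (Sup K) - F x - D x * (Sup K - x) \<ge> - (\<epsilon> * (Sup K - x))"
          using A1 tf(3) by (simp add: abs_le_iff)
        have a2: "F (Inf K) - F x - D x * (Inf K - x) \<le> \<epsilon> * (x - Inf K)"
          using A2 tf(2) by (simp add: abs_le_iff abs_minus_commute)
        have e1: "D x * (Sup K - Inf K) = D x * (Sup K - x) - D x * (Inf K - x)"
          by (simp add: algebra_simps)
        have e2: "\<epsilon> * (Sup K - Inf K) = \<epsilon> * (Sup K - x) + \<epsilon> * (x - Inf K)"
          by (simp add: algebra_simps)
        show ?thesis using a1 a2 e1 e2 by linarith
      qed
      moreover have "D x * (Sup K - Inf K) \<ge> h x * (Sup K - Inf K)"
        using hD tf by (intro mult_right_mono) auto
      ultimately show ?thesis using tf False by (simp add: h'_def mult.commute)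
    qed
  qed
  have "F b - F a = (\<Sum>(x,K)\<in>p. F (Sup K) - F (Inf K))"
    using additive_tagged_division_1[OF ab p, of F] by simp
  also have "\<dots> \<ge> (\<Sum>(x,K)\<in>p. content K * h' x - \<epsilon> * content K - (if x \<in> N then norm (F (Sup K) - F (Inf K)) else 0))"
  proof (intro sum_mono)
    fix i assume i: "i \<in> p"
    obtain x K where iK: "i = (x,K)" by fastforce
    show "(case i of (x, K) \<Rightarrow> content K * h' x - \<epsilon> * content K - (if x \<in> N then norm (F (Sup K) - F (Inf K)) else 0))
        \<le> (case i of (x, K) \<Rightarrow> F (Sup K) - F (Inf K))"
      using termb[of x K] i iK by simp
  qed
  also have "(\<Sum>(x,K)\<in>p. content K * h' x - \<epsilon> * content K - (if x \<in> N then norm (F (Sup K) - F (Inf K)) else 0))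
     = (\<Sum>(x,K)\<in>p. content K * h' x) - \<epsilon> * (\<Sum>(x,K)\<in>p. content K)
      - (\<Sum>(x,K)\<in>p. (if x \<in> N then norm (F (Sup K) - F (Inf K)) else 0))"
    by (simp only: split_def sum_subtractf sum_distrib_left)
  finally have S1: "F b - F a \<ge> (\<Sum>(x,K)\<in>p. content K * h' x) - \<epsilon> * (\<Sum>(x,K)\<in>p. content K)
      - (\<Sum>(x,K)\<in>p. (if x \<in> N then norm (F (Sup K) - F (Inf K)) else 0))" .
  have c: "(\<Sum>(x,K)\<in>p. content K) = b - a"
  proof -
    have "(\<Sum>(x,K)\<in>p. content K) = (\<Sum>(x,K)\<in>p. Sup K - Inf K)"
      using tagged_pair_facts(6)[OF p] by (intro sum.cong) auto
    also have "\<dots> = b - a" using additive_tagged_division_1[OF ab p, of "\<lambda>x. x"] by simp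
    finally show ?thesis .
  qed
  have i1: "(\<Sum>(x,K)\<in>p. content K * h' x) \<ge> I - \<epsilon>"
    using g1p[rule_format, OF conjI[OF p fp1]] by (simp add: split_def abs_less_iff)
  have eqN: "(\<Sum>(x,K)\<in>p. (if x \<in> N then norm (F (Sup K) - F (Inf K)) else 0))
        = (\<Sum>i\<in>pN. norm (F (Sup (snd i)) - F (Inf (snd i))))"
    unfolding pN_def using finp by (simp add: sum.inter_filter split_def del: real_norm_def)
  have eqN2: "(\<Sum>(x,K)\<in>p. content K * indicator N x) = (\<Sum>i\<in>pN. Sup (snd i) - Inf (snd i))"
  proof -
    have "(\<Sum>(x,K)\<in>p. content K * indicator N x) = (\<Sum>i\<in>p. if fst i \<in> N then Sup (snd i) - Inf (snd i) else 0)"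
      using tagged_pair_facts(6)[OF p] by (intro sum.cong) (auto simp: indicator_def)
    also have "\<dots> = (\<Sum>i\<in>pN. Sup (snd i) - Inf (snd i))"
      unfolding pN_def using finp by (simp add: sum.inter_filter)
    finally show ?thesis .
  qed
  have "(\<Sum>(x,K)\<in>p. content K * indicator N x) < \<delta>"
    using g2p[rule_format, OF conjI[OF p fp2]] by (simp add: split_def)
  then have small: "(\<Sum>i\<in>pN. Sup (snd i) - Inf (snd i)) < \<delta>" using eqN2 by simp
  have pNsub: "pN \<subseteq> p" unfolding pN_def by auto
  have "(\<Sum>i\<in>pN. norm (F (Sup (snd i)) - F (Inf (snd i)))) < \<epsilon>"
  proof (rule acd)
    show "finite pN" using finp pNsub finite_subset by blast
    show "\<forall>i\<in>pN. Inf (snd i) \<le> Sup (snd i) \<and> {Inf (snd i)..Sup (snd i)} \<subseteq> {a..b}"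
      using tagged_pair_facts(4,5)[OF p] pNsub by auto
    show "disjoint_family_on (\<lambda>i. {Inf (snd i)<..<Sup (snd i)}) pN"
      unfolding disjoint_family_on_def
    proof (intro ballI impI)
      fix i j assume i: "i \<in> pN" and j: "j \<in> pN" and ij: "i \<noteq> j"
      obtain x K y L where ixK: "i = (x,K)" and jyL: "j = (y,L)" by fastforce
      have m: "(x,K) \<in> p" "(y,L) \<in> p" using i j pNsub ixK jyL by auto
      have "interior K \<inter> interior L = {}"
        using tagged_division_ofD(5)[OF p m] ij ixK jyL by auto
      then show "{Inf (snd i)<..<Sup (snd i)} \<inter> {Inf (snd j)<..<Sup (snd j)} = {}"
        using tagged_pair_facts(7)[OF p m(1)] tagged_pair_facts(7)[OF p m(2)] ixK jyL by simp
    qed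
  qed (use small in auto)
  then show "I \<le> F b - F a + e"
    using S1 i1 eqN \<epsilon>e c by (simp add: split_def)
qed

theorem proposition1p1:
  fixes \<alpha> \<beta> :: ereal
    and A :: "real \<Rightarrow> real^('n::{finite,linorder})^('n::{finite,linorder})"
    and t0 :: real and x0 :: "real^('n::{finite,linorder})" and x :: "real \<Rightarrow> real^('n::{finite,linorder})"
  assumes "\<alpha> < \<beta>"
    and loc_int: "\<And>i j a b. {a..b} \<subseteq> open_ivl \<alpha> \<beta> \<Longrightarrow>
                     (\<lambda>t. A t $ i $ j) absolutely_integrable_on {a..b}"
    and offdiag: "\<And>t i j. t \<in> open_ivl \<alpha> \<beta> \<Longrightarrow> i \<noteq> j \<Longrightarrow> A t $ i $ j \<ge> 0"
    and t0: "t0 \<in> open_ivl \<alpha> \<beta>"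
    and x0: "\<And>i. x0 $ i > 0"
    and sol: "caratheodory_solution \<alpha> \<beta> A t0 x0 x"
  shows "\<forall>t. t0 < t \<and> ereal t < \<beta> \<longrightarrow>
           (\<Prod>i\<in>UNIV. x t $ i) \<ge>
           exp (integral {t0..t} (\<lambda>\<tau>. trace (A \<tau>) +
                 2 * (\<Sum>(j,k)\<in>{(j,k). j < k}. sqrt (A \<tau> $ j $ k * A \<tau> $ k $ j))))
           * (\<Prod>i\<in>UNIV. x t0 $ i)"
proof (intro allI impI)
  fix t assume tt: "t0 < t \<and> ereal t < \<beta>"
  let ?I = "open_ivl \<alpha> \<beta>"
  have at0: "\<alpha> < ereal t0" using t0 unfolding open_ivl_def by simp
  have sub: "{a..b} \<subseteq> ?I" if "t0 \<le> a" "b \<le> t" for a b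
  proof
    fix s assume "s \<in> {a..b}"
    then have "t0 \<le> s" "s \<le> t" using that by auto
    then have "\<alpha> < ereal s" "ereal s < \<beta>" using at0 tt
      by (meson ereal_less_eq(3) order_less_le_trans, meson ereal_less_eq(3) order_le_less_trans)
    then show "s \<in> ?I" unfolding open_ivl_def by simp
  qed
  have xt0: "x t0 = x0" and acx: "\<And>a b. {a..b} \<subseteq> ?I \<Longrightarrow> abs_cont_on {a..b} x"
    and ae: "AE s in lebesgue. s \<in> ?I \<longrightarrow> (x has_vector_derivative (A s *v x s)) (at s)"
    using sol unfolding caratheodory_solution_def by auto
  obtain N where Nd: "\<And>s. s \<in> space lebesgue - N \<Longrightarrow> s \<in> ?I \<longrightarrow> (x has_vector_derivative (A s *v x s)) (at s)"
    and Nn: "N \<in> null_sets lebesgue"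
    using AE_E3[OF ae] by blast
  have negN: "negligible N" using Nn negligible_iff_null_sets by blast
  have dx: "((\<lambda>s. x s $ i) has_real_derivative (A s *v x s) $ i) (at s)" if "s \<in> ?I" "s \<notin> N" for s i
  proof -
    have "(x has_vector_derivative (A s *v x s)) (at s)" using Nd[of s] that by simp
    then have "((\<lambda>s. x s $ i) has_vector_derivative (A s *v x s) $ i) (at s)"
      by (rule bounded_linear.has_vector_derivative[OF bounded_linear_vec_nth])
    then show ?thesis by (simp add: has_real_derivative_iff_has_vector_derivative)
  qed
  have acc: "abs_cont_on {a..b} (\<lambda>s. x s $ i)" if "t0 \<le> a" "b \<le> t" for a b i
    using ac_component[OF acx[OF sub[OF that]]] .
  have contc: "continuous_on {t0..t} (\<lambda>s. x s $ i)" for i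
    using ac_continuous[OF acc[of t0 t i]] by simp
  have pos: "\<forall>s\<in>{t0..t}. \<forall>i. x s $ i > 0"
  proof (rule ccontr)
    assume np: "\<not> (\<forall>s\<in>{t0..t}. \<forall>i. x s $ i > 0)"
    define Z where "Z = {s\<in>{t0..t}. \<exists>i. x s $ i \<le> 0}"
    have Zne: "Z \<noteq> {}" using np unfolding Z_def by (auto simp: not_less)
    have Zeq: "Z = (\<Union>i\<in>UNIV. {s\<in>{t0..t}. x s $ i \<le> 0})" unfolding Z_def by auto
    have Zc: "closed Z" unfolding Zeq
    proof (rule closed_UN)
      show "finite (UNIV::'n set)" by simp
      show "\<forall>i\<in>UNIV. closed {s \<in> {t0..t}. x s $ i \<le> 0}"
        by (intro ballI continuous_on_closed_Collect_le contc continuous_on_const closed_atLeastAtMost)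
    qed
    have Zb: "bdd_below Z" unfolding Z_def by (rule bdd_belowI[of _ t0]) auto
    define ss where "ss = Inf Z"
    have ssZ: "ss \<in> Z" using closed_contains_Inf[OF Zne Zb Zc] ss_def by simp
    then obtain i where ssS: "ss \<in> {t0..t}" and xi: "x ss $ i \<le> 0" unfolding Z_def by auto
    have before: "x s $ j > 0" if "t0 \<le> s" "s < ss" for s j
    proof (rule ccontr)
      assume "\<not> x s $ j > 0"
      then have "s \<in> Z" using that ssS unfolding Z_def by (auto simp: not_less)
      then have "ss \<le> s" unfolding ss_def by (rule cInf_lower[OF _ Zb])
      then show False using that by simp
    qed
    have tss: "t0 < ss"
    proof (rule ccontr)
      assume "\<not> t0 < ss" then have "ss = t0" using ssS by auto
      then show False using xi xt0 x0[of i] by simp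
    qed
    define M where "M = integral {t0..t} (\<lambda>s. \<bar>A s $ i $ i\<bar>)"
    define c where "c = x0 $ i * exp (- M)"
    have cpos: "c > 0" using x0 unfolding c_def by simp
    have absT: "(\<lambda>s. \<bar>A s $ i $ i\<bar>) integrable_on {t0..t}"
      using loc_int[OF sub[OF order_refl order_refl], of i i] unfolding absolutely_integrable_on_def by simp
    have bound: "c \<le> x s1 $ i" if s1: "t0 \<le> s1" "s1 < ss" for s1
    proof -
      have s1t: "s1 \<le> t" using s1 ssS by auto
      have pos1: "x s $ j > 0" if "s \<in> {t0..s1}" for s j using before[of s j] that s1 by auto
      have ai1: "(\<lambda>s. A s $ i $ i) absolutely_integrable_on {t0..s1}" using loc_int sub[OF order_refl s1t] by auto
      have int1: "(\<lambda>s. A s $ i $ i) integrable_on {t0..s1}" using ai1 absolutely_integrable_on_def by blast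
      have abs1: "(\<lambda>s. \<bar>A s $ i $ i\<bar>) integrable_on {t0..s1}" using ai1 unfolding absolutely_integrable_on_def by simp
      have der: "\<exists>D. ((\<lambda>s. ln (x s $ i)) has_real_derivative D) (at s within {t0..s1}) \<and> A s $ i $ i \<le> D"
        if s: "s \<in> {t0..s1} - N" for s
      proof -
        have sI: "s \<in> ?I" using s sub[OF order_refl s1t] by auto
        have xp: "\<And>j. x s $ j > 0" using pos1 s by auto
        have d1: "((\<lambda>s. ln (x s $ i)) has_real_derivative inverse (x s $ i) * (A s *v x s) $ i) (at s within {t0..s1})"
          using DERIV_chain'[OF has_field_derivative_at_within[OF dx[OF sI, of i]] DERIV_ln[OF xp[of i]]] s by simp
        have nn: "(\<Sum>j\<in>UNIV - {i}. A s $ i $ j * x s $ j) \<ge> 0"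
        proof (rule sum_nonneg)
          fix j assume "j \<in> UNIV - {i}"
          then have "A s $ i $ j \<ge> 0" using offdiag[OF sI, of i j] by auto
          then show "A s $ i $ j * x s $ j \<ge> 0" using xp[of j] by simp
        qed
        have "(A s *v x s) $ i = (\<Sum>j\<in>UNIV. A s $ i $ j * x s $ j)" by (simp add: matrix_vector_mult_def)
        also have "\<dots> = A s $ i $ i * x s $ i + (\<Sum>j\<in>UNIV - {i}. A s $ i $ j * x s $ j)"
          by (simp add: sum.remove)
        finally have "A s $ i $ i * x s $ i \<le> (A s *v x s) $ i" using nn by simp
        then have "A s $ i $ i \<le> inverse (x s $ i) * (A s *v x s) $ i" using xp[of i] by (simp add: field_simps)
        with d1 show ?thesis by blast
      qed
      have acl: "abs_cont_on {t0..s1} (\<lambda>s. ln (x s $ i))"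
        by (rule ac_ln[OF acc[OF order_refl s1t]]) (rule pos1)
      have k: "integral {t0..s1} (\<lambda>s. A s $ i $ i) \<le> ln (x s1 $ i) - ln (x t0 $ i)"
        by (rule key_ineq[OF s1(1) acl negN der integrable_integral[OF int1]])
      have l1: "- integral {t0..s1} (\<lambda>s. \<bar>A s $ i $ i\<bar>) \<le> integral {t0..s1} (\<lambda>s. A s $ i $ i)"
        using integral_le[OF integrable_neg[OF abs1] int1] integral_neg[of "{t0..s1}" "\<lambda>s. \<bar>A s $ i $ i\<bar>"]
        by simp
      have l2: "integral {t0..s1} (\<lambda>s. \<bar>A s $ i $ i\<bar>) \<le> M" unfolding M_def
        by (rule integral_subset_le) (use abs1 absT s1t in auto)
      have "ln (x0 $ i) - M \<le> ln (x s1 $ i)" using k xt0 l1 l2 by simp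
      then have "exp (ln (x0 $ i) - M) \<le> exp (ln (x s1 $ i))" by simp
      then have "exp (ln (x0 $ i) - M) \<le> x s1 $ i" using pos1[of s1 i] s1 by simp
      then show ?thesis unfolding c_def using x0[of i] by (simp add: exp_diff exp_minus field_simps)
    qed
    have C: "closed {s\<in>{t0..t}. c \<le> x s $ i}"
      by (intro continuous_on_closed_Collect_le continuous_on_const contc closed_atLeastAtMost)
    have "{t0..<ss} \<subseteq> {s\<in>{t0..t}. c \<le> x s $ i}" using bound ssS by auto
    then have "closure {t0..<ss} \<subseteq> {s\<in>{t0..t}. c \<le> x s $ i}" by (rule closure_minimal[OF _ C])
    moreover have "ss \<in> closure {t0..<ss}" using closure_atLeastLessThan[OF tss] tss by simp
    ultimately have "ss \<in> {s\<in>{t0..t}. c \<le> x s $ i}" by (rule subsetD)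
    then have "c \<le> x ss $ i" by simp
    then show False using cpos xi by simp
  qed
  show "(\<Prod>i\<in>UNIV. x t $ i) \<ge>
           exp (integral {t0..t} (\<lambda>\<tau>. trace (A \<tau>) +
                 2 * (\<Sum>(j,k)\<in>{(j,k). j < k}. sqrt (A \<tau> $ j $ k * A \<tau> $ k $ j))))
           * (\<Prod>i\<in>UNIV. x t0 $ i)"
  proof -
    define h where "h = (\<lambda>\<tau>. trace (A \<tau>) +
                 2 * (\<Sum>(j,k)\<in>{(j,k). j < k}. sqrt (A \<tau> $ j $ k * A \<tau> $ k $ j)))"
    have tle: "t0 \<le> t" using tt by simp
    have ai: "(\<lambda>s. A s $ i $ j) absolutely_integrable_on {t0..t}" for i j
      using loc_int sub[of t0 t] by auto
    have tr: "(\<lambda>\<tau>. trace (A \<tau>)) integrable_on {t0..t}"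
      unfolding trace_def by (rule integrable_sum) (use ai absolutely_integrable_on_def in auto)
    have sq: "(\<lambda>\<tau>. \<Sum>(j,k)\<in>{(j,k). j < k}. sqrt (A \<tau> $ j $ k * A \<tau> $ k $ j)) integrable_on {t0..t}"
    proof (rule integrable_sum)
      fix p :: "'n \<times> 'n"
      obtain j k where p: "p = (j,k)" by fastforce
      show "(\<lambda>\<tau>. case p of (j, k) \<Rightarrow> sqrt (A \<tau> $ j $ k * A \<tau> $ k $ j)) integrable_on {t0..t}"
        unfolding p using sqrt_prod_integrable[OF ai ai] by simp
    qed simp
    have hint: "h integrable_on {t0..t}"
      unfolding h_def using integrable_add[OF tr integrable_on_cmult_left[OF sq, of 2]] by simp
    define F where "F s = (\<Sum>i\<in>UNIV. ln (x s $ i))" for s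
    have acF: "abs_cont_on {t0..t} F"
      unfolding F_def by (rule ac_sum) (use ac_ln[OF acc[OF order_refl order_refl]] pos in auto)
    have derF: "\<exists>D. (F has_real_derivative D) (at s within {t0..t}) \<and> h s \<le> D"
      if s: "s \<in> {t0..t} - N" for s
    proof -
      have sI: "s \<in> ?I" using s sub[OF order_refl order_refl] by auto
      have xp: "\<And>i. x s $ i > 0" using pos s by auto
      have d1: "((\<lambda>s. ln (x s $ i)) has_real_derivative inverse (x s $ i) * (A s *v x s) $ i) (at s within {t0..t})" for i
        using DERIV_chain'[OF has_field_derivative_at_within[OF dx[OF sI, of i]] DERIV_ln[OF xp[of i]]] using s by simp
      have "(F has_real_derivative (\<Sum>i\<in>UNIV. inverse (x s $ i) * (A s *v x s) $ i)) (at s within {t0..t})"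
        unfolding F_def by (rule DERIV_sum) (rule d1)
      moreover have "h s \<le> (\<Sum>i\<in>UNIV. inverse (x s $ i) * (A s *v x s) $ i)"
        using metzler_ineq[of "x s" "A s", OF xp offdiag[OF sI]] unfolding h_def
        by (simp add: divide_inverse mult.commute)
      ultimately show ?thesis by blast
    qed
    have key: "integral {t0..t} h \<le> F t - F t0"
      by (rule key_ineq[OF tle acF negN derF integrable_integral[OF hint]])
    have eF: "exp (F s) = (\<Prod>i\<in>UNIV. x s $ i)" if "s \<in> {t0..t}" for s
      using pos that by (simp add: F_def exp_sum)
    have "exp (integral {t0..t} h) \<le> exp (F t - F t0)" using key by simp
    also have "\<dots> = exp (F t) / exp (F t0)" by (simp add: exp_diff)
    finally have "exp (integral {t0..t} h) * exp (F t0) \<le> exp (F t)" by (simp add: field_simps)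
    then show ?thesis using eF[of t] eF[of t0] tle unfolding h_def by simp
  qed
qed

end
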